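(* Let $\mathbf G=(G,\le,\cdot,/,0,1)$ be a left-residuated po-groupoid satisfying the double negation law $\neg\neg x=x$ and the equation $(x\to y)\to y=(y\to x)\to x$ for all $x,y\in G$. Then for all $x,y,z\in G$: (a) $1\to x=x$; (b) $x\le y\to x$; (c) $x\le y$ iff $\neg y\le\neg x$ iff $x\to y=1$; (d) if $x\le y$ then $y\to z\le x\to z$.
   Context: A (bounded integral) left-residuated po-groupoid is a structure $\mathbf G=(G,\le,\cdot,/,0,1)$ where $(G,\le,0,1)$ is a bounded poset with least element $0$ and greatest element $1$, $\cdot$ is a binary operation on $G$ with $1\cdot x=x\cdot 1=x$ for all $x$ (no associativity, commutativity or monotonicity is assumed), and $/$ is a binary operation on $G$ satisfying the left residuation law: for all $x,y,z\in G$, $x\cdot y\le z\iff x\le z/y$. The negation is defined by $\neg x:=0/x$ and the implication by $x\to y:=\neg x/\neg y$. *)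

theory Defs
  imports Main
begin

text \<open>A bounded integral left-residuated po-groupoid, with carrier the whole type 'a.
  le is the partial order, mult the groupoid operation, res the left residual (x / y),
  zero the least and one the greatest element (and the unit of mult).\<close>
definition lrpg :: "('a \<Rightarrow> 'a \<Rightarrow> bool) \<Rightarrow> ('a \<Rightarrow> 'a \<Rightarrow> 'a) \<Rightarrow> ('a \<Rightarrow> 'a \<Rightarrow> 'a) \<Rightarrow> 'a \<Rightarrow> 'a \<Rightarrow> bool"
  where "lrpg le mult res zero one \<longleftrightarrow>
     (\<forall>x. le x x) \<and>
     (\<forall>x y. le x y \<and> le y x \<longrightarrow> x = y) \<and>
     (\<forall>x y z. le x y \<and> le y z \<longrightarrow> le x z) \<and>
     (\<forall>x. le zero x) \<and> (\<forall>x. le x one) \<and>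
     (\<forall>x. mult one x = x \<and> mult x one = x) \<and>
     (\<forall>x y z. le (mult x y) z \<longleftrightarrow> le x (res z y))"

definition neg :: "('a \<Rightarrow> 'a \<Rightarrow> 'a) \<Rightarrow> 'a \<Rightarrow> 'a \<Rightarrow> 'a"
  where "neg res zero x = res zero x"

definition imp :: "('a \<Rightarrow> 'a \<Rightarrow> 'a) \<Rightarrow> 'a \<Rightarrow> 'a \<Rightarrow> 'a \<Rightarrow> 'a"
  where "imp res zero x y = res (neg res zero x) (neg res zero y)"

end

theory Submission
  imports Defs
begin

theorem lemma3:
  fixes le :: "'a \<Rightarrow> 'a \<Rightarrow> bool" and mult res :: "'a \<Rightarrow> 'a \<Rightarrow> 'a" and zero one :: 'a
  assumes G: "lrpg le mult res zero one"
    and dn: "\<And>x. neg res zero (neg res zero x) = x"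
    and eq: "\<And>x y. imp res zero (imp res zero x y) y = imp res zero (imp res zero y x) x"
  shows "\<forall>x y z.
           imp res zero one x = x \<and>
           le x (imp res zero y x) \<and>
           (le x y \<longleftrightarrow> le (neg res zero y) (neg res zero x)) \<and>
           (le (neg res zero y) (neg res zero x) \<longleftrightarrow> imp res zero x y = one) \<and>
           (le x y \<longrightarrow> le (imp res zero y z) (imp res zero x z))"
proof -
  have refl: "\<And>x. le x x" and anti: "\<And>x y. le x y \<Longrightarrow> le y x \<Longrightarrow> x = y"
    and trans: "\<And>x y z. le x y \<Longrightarrow> le y z \<Longrightarrow> le x z"
    and bot: "\<And>x. le zero x" and top: "\<And>x. le x one"
    and u1: "\<And>x. mult one x = x" and u2: "\<And>x. mult x one = x"
    and rl: "\<And>x y z. le (mult x y) z \<longleftrightarrow> le x (res z y)"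
    using G unfolding lrpg_def by blast+
  let ?n = "neg res zero"
  let ?i = "imp res zero"
  have r1: "res z one = z" for z
    using rl[of _ one z] u2 refl anti by metis
  have rone: "res z y = one \<longleftrightarrow> le y z" for y z
    using rl[of one y z] u1 top anti by metis
  have mono: "le z z' \<Longrightarrow> le (res z y) (res z' y)" for z z' y
    using rl refl trans by metis
  have n1: "?n one = zero" using r1 unfolding neg_def by simp
  have a: "?i one x = x" for x
    using dn[of x] n1 unfolding imp_def neg_def by simp
  have b: "le x (?i y x)" for x y
  proof -
    have "le (mult x (?n x)) zero"
      using dn[of x] rl[of x "?n x" zero] refl unfolding neg_def by metis
    hence "le (mult x (?n x)) (?n y)" using bot trans by blast
    thus ?thesis using rl unfolding imp_def by blast
  qed
  have c1: "le (?n y) (?n x) \<longleftrightarrow> ?i x y = one" for x y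
    using rone unfolding imp_def by blast
  have c2: "le (?n y) (?n x) \<Longrightarrow> le x y" for x y
  proof -
    assume h: "le (?n y) (?n x)"
    hence "?i x y = one" using c1 by blast
    hence "?i (?i x y) y = y" using a by simp
    hence "?i (?i y x) x = y" using eq by simp
    thus "le x y" using b[of x "?i y x"] by simp
  qed
  have c3: "le x y \<Longrightarrow> le (?n y) (?n x)" for x y
  proof -
    assume "le x y"
    hence "le (?n (?n x)) (?n (?n y))" using dn by simp
    thus ?thesis by (rule c2)
  qed
  have d: "le x y \<Longrightarrow> le (?i y z) (?i x z)" for x y z
    using c3 mono unfolding imp_def by blast
  show ?thesis using a b c1 c2 c3 d by blast
qed

end
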